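(* Let $I$ be the ideal of $\mathrm{WCQSym}$ generated by $B_\varepsilon=\{M_\gamma:\gamma\in\mathcal C_\varepsilon\}$. For every $\tilde{\mathbb N}$-composition $\alpha\in\mathcal C_N$, $$M_\alpha+(-1)^{\ell_\varepsilon(\alpha)+1}M_{\bar\alpha}\in I.$$
   Context: $\tilde{\mathbb N}=\mathbb N\cup\{\varepsilon\}$ with $0+\varepsilon=\varepsilon+\varepsilon=\varepsilon$ and $n+\varepsilon=n$ for integers $n\ge1$. $\mathbf{k}$ is a commutative ring containing $\mathbb Q$; $\mathbf{k}[[X]]_{\tilde{\mathbb N}}$, $X=\{x_1<x_2<\cdots\}$, is the algebra of possibly infinite linear combinations of formal monomials $\prod x_i^{f(x_i)}$ with $f$ finitely supported $\tilde{\mathbb N}$-valued, multiplied by adding exponents in $\tilde{\mathbb N}$. An $\tilde{\mathbb N}$-composition is a finite (possibly empty) sequence of elements of $\{\varepsilon,1,2,\dots\}$; $M_{(\gamma_1,\dots,\gamma_k)}=\sum_{1\le i_1<\cdots<i_k}x_{i_1}^{\gamma_1}\cdots x_{i_k}^{\gamma_k}$, $M_\emptyset=1$, and $\mathrm{WCQSym}$ is their $\mathbf k$-span, a subalgebra of $\mathbf{k}[[X]]_{\tilde{\mathbb N}}$. $\ell_\varepsilon(\alpha)$ is the number of entries of $\alpha$ equal to $\varepsilon$ and $\bar\alpha$ is $\alpha$ with its $\varepsilon$ entries deleted. $\mathcal C_\varepsilon$ is the set of $\tilde{\mathbb N}$-compositions with first entry $\varepsilon$, and $\mathcal C_N$ the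 set of all others (the empty composition and those whose first entry is a positive integer). *)

theory Defs
  imports Main
begin

text \<open>The exponent monoid N-tilde = N \<union> {eps}. Num 0 is the integer 0.\<close>
datatype ntilde = Eps | Num nat

fun tplus :: "ntilde \<Rightarrow> ntilde \<Rightarrow> ntilde" where
  "tplus (Num a) (Num b) = Num (a + b)"
| "tplus (Num 0) Eps = Eps"
| "tplus (Num (Suc n)) Eps = Num (Suc n)"
| "tplus Eps (Num 0) = Eps"
| "tplus Eps (Num (Suc n)) = Num (Suc n)"
| "tplus Eps Eps = Eps"

text \<open>Exponent maps: variable x_(i+1) is indexed by i :: nat.\<close>
definition finsupp :: "(nat \<Rightarrow> ntilde) \<Rightarrow> bool" where
  "finsupp f \<longleftrightarrow> finite {i. f i \<noteq> Num 0}"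

text \<open>Elements of k[[X]]_Ntilde: coefficient functions on monomials
  (only finitely supported exponent maps are genuine monomials).\<close>
type_synonym 'k wser = "(nat \<Rightarrow> ntilde) \<Rightarrow> 'k"

definition wmult :: "'k::comm_ring_1 wser \<Rightarrow> 'k wser \<Rightarrow> 'k wser" where
  "wmult F G = (\<lambda>h. \<Sum>p\<in>{(f, g). finsupp f \<and> finsupp g \<and> (\<lambda>i. tplus (f i) (g i)) = h}.
                     F (fst p) * G (snd p))"

definition is_comp :: "ntilde list \<Rightarrow> bool" where
  "is_comp \<alpha> \<longleftrightarrow> Num 0 \<notin> set \<alpha>"

text \<open>Monomial quasisymmetric function M_alpha: the coefficient of x^h is 1 iff
  h is a monomial x_(i1)^(a1) ... x_(ik)^(ak) with i1 < ... < ik, i.e. iff the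
  nonzero exponents of h, read in increasing variable order, form alpha.\<close>
definition Mq :: "ntilde list \<Rightarrow> 'k::comm_ring_1 wser" where
  "Mq \<alpha> = (\<lambda>h. if finsupp h \<and> map h (sorted_list_of_set {i. h i \<noteq> Num 0}) = \<alpha>
                 then 1 else 0)"

definition WCQSym :: "'k::comm_ring_1 wser set" where
  "WCQSym = {F. \<exists>S (c :: ntilde list \<Rightarrow> 'k). finite S \<and> (\<forall>\<alpha>\<in>S. is_comp \<alpha>) \<and>
                   F = (\<lambda>h. \<Sum>\<alpha>\<in>S. c \<alpha> * Mq \<alpha> h)}"

definition C_eps :: "ntilde list set" where
  "C_eps = {\<gamma>. is_comp \<gamma> \<and> \<gamma> \<noteq> [] \<and> hd \<gamma> = Eps}"

definition C_N :: "ntilde list set" where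
  "C_N = {\<gamma>. is_comp \<gamma> \<and> (\<gamma> = [] \<or> hd \<gamma> \<noteq> Eps)}"

definition I_eps :: "'k::comm_ring_1 wser set" where
  "I_eps = {F. \<exists>n (w :: nat \<Rightarrow> 'k wser) \<gamma>. (\<forall>j<n. w j \<in> WCQSym \<and> \<gamma> j \<in> C_eps) \<and>
                   F = (\<lambda>h. \<Sum>j<n. wmult (w j) (Mq (\<gamma> j)) h)}"

definition len_eps :: "ntilde list \<Rightarrow> nat" where
  "len_eps \<alpha> = length (filter (\<lambda>x. x = Eps) \<alpha>)"

definition bar :: "ntilde list \<Rightarrow> ntilde list" where
  "bar \<alpha> = filter (\<lambda>x. x \<noteq> Eps) \<alpha>"

end

theory Submission
  imports Defs
begin


lemma tplus_0L[simp]: "tplus (Num 0) x = x" by (cases x) auto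
lemma tplus_0R[simp]: "tplus x (Num 0) = x"
  by (cases "(x, Num 0)" rule: tplus.cases) auto
lemma tplus_eq_0: "tplus x y = Num 0 \<longleftrightarrow> x = Num 0 \<and> y = Num 0"
  by (cases "(x,y)" rule: tplus.cases) auto
lemma tplus_Eps_R: "x \<noteq> Num 0 \<Longrightarrow> tplus x Eps = x"
  by (cases "(x,Eps)" rule: tplus.cases) auto

fun ntval :: "ntilde \<Rightarrow> nat" where "ntval Eps = 0" | "ntval (Num k) = k"
lemma ntval_tplus: "ntval (tplus x y) = ntval x + ntval y"
  by (cases "(x,y)" rule: tplus.cases) auto

lemma finite_ntval_le: "finite {y. ntval y \<le> k}"
proof -
  have "{y. ntval y \<le> k} \<subseteq> insert Eps (Num ` {..k})"
    by (auto, case_tac x, auto)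
  thus ?thesis by (rule finite_subset) auto
qed

definition supp :: "(nat \<Rightarrow> ntilde) \<Rightarrow> nat set" where "supp h = {i. h i \<noteq> Num 0}"
definition pat :: "(nat \<Rightarrow> ntilde) \<Rightarrow> ntilde list" where
  "pat h = map h (sorted_list_of_set (supp h))"

lemma Mq_alt: "Mq \<alpha> h = (if finsupp h \<and> pat h = \<alpha> then 1 else 0)"
  unfolding Mq_def pat_def supp_def by simp

lemma pat_nz: "finsupp h \<Longrightarrow> Num 0 \<notin> set (pat h)"
  unfolding pat_def supp_def finsupp_def by auto

fun qs :: "ntilde list \<Rightarrow> ntilde list \<Rightarrow> ntilde list \<Rightarrow> nat" where
  "qs u g [] = (if u = [] \<and> g = [] then 1 else 0)"
| "qs u g (x#t) = (if g \<noteq> [] \<and> hd g = x then qs u (tl g) t else 0)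
     + (if u \<noteq> [] \<and> hd u = x then qs (tl u) g t else 0)
     + (if u \<noteq> [] \<and> g \<noteq> [] \<and> hd u \<noteq> Num 0 \<and> hd g \<noteq> Num 0 \<and> tplus (hd u) (hd g) = x
        then qs (tl u) (tl g) t else 0)"

lemma qs_nil: "qs [] g t = (if t = g then 1 else 0)"
proof (induction t arbitrary: g)
  case (Cons x t)
  then show ?case by (cases g) auto
qed simp

definition LBF :: "ntilde list \<Rightarrow> (ntilde list \<times> ntilde list) set" where
  "LBF t = {(a,b). length a = length t \<and> length b = length t \<and> map2 tplus a b = t}"

definition LB :: "ntilde list \<Rightarrow> ntilde list \<Rightarrow> ntilde list \<Rightarrow> (ntilde list \<times> ntilde list) set" where
  "LB u g t = {(a,b). (a,b) \<in> LBF t \<and> filter (\<lambda>x. x \<noteq> Num 0) a = u \<and> filter (\<lambda>x. x \<noteq> Num 0) b = g}"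

lemma finite_LBF: "finite (LBF t)"
proof (induction t)
  case Nil
  have "LBF [] = {([],[])}" by (auto simp: LBF_def)
  then show ?case by simp
next
  case (Cons x t)
  have "LBF (x#t) \<subseteq> (\<lambda>((a0,b0),(a,b)). (a0#a, b0#b)) ` (({y. ntval y \<le> ntval x} \<times> {y. ntval y \<le> ntval x}) \<times> LBF t)"
  proof
    fix p assume "p \<in> LBF (x#t)"
    then obtain a b where p: "p = (a,b)" and l: "length a = Suc (length t)" "length b = Suc (length t)"
      and m: "map2 tplus a b = x#t" by (auto simp: LBF_def)
    obtain a0 a' where a: "a = a0#a'" using l by (cases a) auto
    obtain b0 b' where b: "b = b0#b'" using l by (cases b) auto
    have x: "tplus a0 b0 = x" and t: "map2 tplus a' b' = t" using m a b by auto
    have "(a',b') \<in> LBF t" using l t a b by (simp add: LBF_def)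
    moreover have "ntval a0 \<le> ntval x" "ntval b0 \<le> ntval x" using x ntval_tplus[of a0 b0] by auto
    ultimately show "p \<in> (\<lambda>((a0,b0),(a,b)). (a0#a, b0#b)) ` (({y. ntval y \<le> ntval x} \<times> {y. ntval y \<le> ntval x}) \<times> LBF t)"
      unfolding p a b by (intro image_eqI[where x="((a0,b0),(a',b'))"]) auto
  qed
  moreover have "finite ((\<lambda>((a0,b0),(a,b)). (a0#a, b0#b)) ` (({y. ntval y \<le> ntval x} \<times> {y. ntval y \<le> ntval x}) \<times> LBF t))"
    using Cons finite_ntval_le by auto
  ultimately show ?case by (rule finite_subset)
qed

lemma finite_LB: "finite (LB u g t)"
  by (rule finite_subset[OF _ finite_LBF[of t]]) (auto simp: LB_def)

lemma LB_Nil: "LB u g [] = (if u = [] \<and> g = [] then {([],[])} else {})"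
  by (auto simp: LB_def LBF_def)


lemma LB_Cons: assumes "x \<noteq> Num 0"
  shows "LB u g (x#t) =
   (if g \<noteq> [] \<and> hd g = x then (\<lambda>(a,b). (Num 0#a, x#b)) ` LB u (tl g) t else {}) \<union>
   (if u \<noteq> [] \<and> hd u = x then (\<lambda>(a,b). (x#a, Num 0#b)) ` LB (tl u) g t else {}) \<union>
   (if u \<noteq> [] \<and> g \<noteq> [] \<and> hd u \<noteq> Num 0 \<and> hd g \<noteq> Num 0 \<and> tplus (hd u) (hd g) = x
        then (\<lambda>(a,b). (hd u#a, hd g#b)) ` LB (tl u) (tl g) t else {})" (is "?L = ?R")
proof
  show "?L \<subseteq> ?R"
  proof
    fix p assume "p \<in> ?L"
    then obtain a b where p: "p = (a,b)" and l: "length a = Suc (length t)" "length b = Suc (length t)"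
      and m: "map2 tplus a b = x#t" and fa: "filter (\<lambda>x. x \<noteq> Num 0) a = u"
      and fb: "filter (\<lambda>x. x \<noteq> Num 0) b = g" by (auto simp: LB_def LBF_def)
    then obtain a0 a' b0 b' where ab: "a = a0#a'" "b = b0#b'" by (cases a; cases b) auto
    have x: "tplus a0 b0 = x" and t: "map2 tplus a' b' = t" using m ab by auto
    have dj: "a0 = Num 0 \<and> b0 \<noteq> Num 0 \<or> a0 \<noteq> Num 0 \<and> b0 = Num 0 \<or> a0 \<noteq> Num 0 \<and> b0 \<noteq> Num 0"
      using x assms by (auto simp: tplus_eq_0)
    have mem: "(a',b') \<in> LB (filter (\<lambda>x. x \<noteq> Num 0) a') (filter (\<lambda>x. x \<noteq> Num 0) b') t"
      using l ab t by (simp add: LB_def LBF_def)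
    from dj show "p \<in> ?R"
    proof (elim disjE conjE)
      assume h: "a0 = Num 0" "b0 \<noteq> Num 0"
      have xb: "b0 = x" using x h by simp
      have g: "g = x # filter (\<lambda>x. x \<noteq> Num 0) b'" and u: "u = filter (\<lambda>x. x \<noteq> Num 0) a'"
        using fa fb ab h xb by auto
      have "p \<in> (\<lambda>(a,b). (Num 0#a, x#b)) ` LB u (tl g) t"
        by (rule image_eqI[of _ _ "(a',b')"]) (simp_all add: p ab h g u mem xb)
      then show ?thesis using g by simp
    next
      assume h: "a0 \<noteq> Num 0" "b0 = Num 0"
      have xa: "a0 = x" using x h by simp
      have u: "u = x # filter (\<lambda>x. x \<noteq> Num 0) a'" and g: "g = filter (\<lambda>x. x \<noteq> Num 0) b'"
        using fa fb ab h xa by auto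
      have "p \<in> (\<lambda>(a,b). (x#a, Num 0#b)) ` LB (tl u) g t"
        by (rule image_eqI[of _ _ "(a',b')"]) (simp_all add: p ab h g u mem xa)
      then show ?thesis using u by simp
    next
      assume h: "a0 \<noteq> Num 0" "b0 \<noteq> Num 0"
      have u: "u = a0 # filter (\<lambda>x. x \<noteq> Num 0) a'" and g: "g = b0 # filter (\<lambda>x. x \<noteq> Num 0) b'"
        using fa fb ab h by auto
      have "p \<in> (\<lambda>(a,b). (hd u#a, hd g#b)) ` LB (tl u) (tl g) t"
        by (rule image_eqI[of _ _ "(a',b')"]) (simp_all add: p ab h g u mem)
      then show ?thesis using u g h x by simp
    qed
  qed
next
  show "?R \<subseteq> ?L"
  proof
    fix p assume "p \<in> ?R"
    then consider (A) a b where "g \<noteq> []" "hd g = x" "(a,b) \<in> LB u (tl g) t" "p = (Num 0#a, x#b)"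
      | (B) a b where "u \<noteq> []" "hd u = x" "(a,b) \<in> LB (tl u) g t" "p = (x#a, Num 0#b)"
      | (C) a b where "u \<noteq> []" "g \<noteq> []" "hd u \<noteq> Num 0" "hd g \<noteq> Num 0" "tplus (hd u) (hd g) = x"
          "(a,b) \<in> LB (tl u) (tl g) t" "p = (hd u#a, hd g#b)"
      by (auto split: if_splits)
    then show "p \<in> ?L"
    proof cases
      case A then show ?thesis using assms by (cases g) (auto simp: LB_def LBF_def)
    next
      case B then show ?thesis using assms by (cases u) (auto simp: LB_def LBF_def)
    next
      case C then show ?thesis using assms by (cases u; cases g) (auto simp: LB_def LBF_def)
    qed
  qed
qed

lemma card_LB: "Num 0 \<notin> set t \<Longrightarrow> card (LB u g t) = qs u g t"
proof (induction t arbitrary: u g)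
  case Nil then show ?case by (simp add: LB_Nil)
next
  case (Cons x t)
  have x: "x \<noteq> Num 0" and t: "Num 0 \<notin> set t" using Cons.prems by auto
  let ?A = "(if g \<noteq> [] \<and> hd g = x then (\<lambda>(a,b). (Num 0#a, x#b)) ` LB u (tl g) t else {})"
  let ?B = "(if u \<noteq> [] \<and> hd u = x then (\<lambda>(a,b). (x#a, Num 0#b)) ` LB (tl u) g t else {})"
  let ?C = "(if u \<noteq> [] \<and> g \<noteq> [] \<and> hd u \<noteq> Num 0 \<and> hd g \<noteq> Num 0 \<and> tplus (hd u) (hd g) = x
        then (\<lambda>(a,b). (hd u#a, hd g#b)) ` LB (tl u) (tl g) t else {})"
  have inj: "inj_on (\<lambda>(a,b). (c#a, d#b)) S" for c d and S :: "(ntilde list \<times> ntilde list) set"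
    by (auto simp: inj_on_def)
  have cA: "card ?A = (if g \<noteq> [] \<and> hd g = x then qs u (tl g) t else 0)"
    using Cons.IH[OF t] by (simp add: card_image[OF inj])
  have cB: "card ?B = (if u \<noteq> [] \<and> hd u = x then qs (tl u) g t else 0)"
    using Cons.IH[OF t] by (simp add: card_image[OF inj])
  have cC: "card ?C = (if u \<noteq> [] \<and> g \<noteq> [] \<and> hd u \<noteq> Num 0 \<and> hd g \<noteq> Num 0 \<and> tplus (hd u) (hd g) = x
        then qs (tl u) (tl g) t else 0)"
    using Cons.IH[OF t] by (simp add: card_image[OF inj])
  have fin: "finite ?A" "finite ?B" "finite ?C" using finite_LB by auto
  have d1: "?A \<inter> ?B = {}" using x by auto
  have d2: "(?A \<union> ?B) \<inter> ?C = {}" using x by auto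
  have "card (LB u g (x#t)) = card (?A \<union> ?B \<union> ?C)" by (simp only: LB_Cons[OF x])
  also have "\<dots> = card ?A + card ?B + card ?C"
    using fin d1 d2 by (simp add: card_Un_disjoint)
  finally show ?case using cA cB cC by simp
qed



lemma map2_map_same: "map2 F (map f xs) (map g xs) = map (\<lambda>x. F (f x) (g x)) xs"
  by (induction xs) auto

lemma wmult_nonfin: assumes "\<not> finsupp h" shows "wmult F G h = 0"
proof -
  have "False" if f: "finsupp f" and g: "finsupp g" and e: "(\<lambda>i. tplus (f i) (g i)) = h" for f g
  proof -
    have "{i. h i \<noteq> Num 0} \<subseteq> {i. f i \<noteq> Num 0} \<union> {i. g i \<noteq> Num 0}"
      using e by (auto simp: tplus_eq_0)
    moreover have "finite ({i. f i \<noteq> Num 0} \<union> {i. g i \<noteq> Num 0})" using f g unfolding finsupp_def by simp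
    ultimately have "finsupp h" unfolding finsupp_def by (rule finite_subset)
    then show False using assms by simp
  qed
  then have E: "{(f, g). finsupp f \<and> finsupp g \<and> (\<lambda>i. tplus (f i) (g i)) = h} = {}" by auto
  show ?thesis unfolding wmult_def E by simp
qed

lemma sorted_supp_sub:
  assumes fin: "finite (supp h)" and sub: "supp f \<subseteq> supp h"
  shows "pat f = filter (\<lambda>x. x \<noteq> Num 0) (map f (sorted_list_of_set (supp h)))"
proof -
  let ?L = "sorted_list_of_set (supp h)"
  have "sorted_list_of_set (supp f) = filter (\<lambda>i. f i \<noteq> Num 0) ?L"
  proof (rule sorted_distinct_set_unique)
    show "sorted (filter (\<lambda>i. f i \<noteq> Num 0) ?L)" by (rule sorted_wrt_filter) simp
    show "set (sorted_list_of_set (supp f)) = set (filter (\<lambda>i. f i \<noteq> Num 0) ?L)"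
      using fin sub finite_subset[OF sub fin] by (auto simp: supp_def)
  qed auto
  then show ?thesis unfolding pat_def by (simp add: filter_map comp_def)
qed

lemma wmult_Mq:
  assumes fs: "finsupp h"
  shows "wmult (Mq u) (Mq g) h = (of_nat (qs u g (pat h)) :: 'k::comm_ring_1)"
proof -
  define L where "L = sorted_list_of_set (supp h)"
  have fin: "finite (supp h)" using fs by (simp add: finsupp_def supp_def)
  have setL: "set L = supp h" and dL: "distinct L" using fin by (auto simp: L_def)
  have ph: "pat h = map h L" by (simp add: pat_def L_def)
  define A where "A = {(f, g'). finsupp f \<and> finsupp g' \<and> (\<lambda>i. tplus (f i) (g' i)) = h}"
  have off: "f i = Num 0 \<and> g' i = Num 0" if "(f,g') \<in> A" "i \<notin> set L" for f g' i
  proof -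
    have "tplus (f i) (g' i) = h i" using that(1) by (auto simp: A_def)
    moreover have "h i = Num 0" using that(2) setL by (auto simp: supp_def)
    ultimately show ?thesis by (simp add: tplus_eq_0)
  qed
  have patA: "pat f = filter (\<lambda>x. x \<noteq> Num 0) (map f L) \<and> pat g' = filter (\<lambda>x. x \<noteq> Num 0) (map g' L)"
    if "(f,g') \<in> A" for f g'
  proof -
    have "supp f \<subseteq> supp h" "supp g' \<subseteq> supp h" using off[OF that] setL by (auto simp: supp_def)
    then show ?thesis using sorted_supp_sub[OF fin] by (simp add: L_def)
  qed
  define \<phi> where "\<phi> = (\<lambda>(f::nat \<Rightarrow> ntilde, g'::nat \<Rightarrow> ntilde). (map f L, map g' L))"
  have inj: "inj_on \<phi> A"
  proof (rule inj_onI)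
    fix p q assume p: "p \<in> A" and q: "q \<in> A" and e: "\<phi> p = \<phi> q"
    obtain f1 g1 where p1: "p = (f1,g1)" by (cases p)
    obtain f2 g2 where q1: "q = (f2,g2)" by (cases q)
    have "f1 = f2"
    proof
      fix i show "f1 i = f2 i"
        using e off[of f1 g1 i] off[of f2 g2 i] p q by (cases "i \<in> set L") (auto simp: \<phi>_def p1 q1)
    qed
    moreover have "g1 = g2"
    proof
      fix i show "g1 i = g2 i"
        using e off[of f1 g1 i] off[of f2 g2 i] p q by (cases "i \<in> set L") (auto simp: \<phi>_def p1 q1)
    qed
    ultimately show "p = q" by (simp add: p1 q1)
  qed
  have imgF: "\<phi> ` A \<subseteq> LBF (pat h)"
  proof
    fix x assume "x \<in> \<phi> ` A"
    then obtain f g' where "(f,g') \<in> A" and x: "x = (map f L, map g' L)" by (auto simp: \<phi>_def)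
    then have "(\<lambda>i. tplus (f i) (g' i)) = h" by (simp add: A_def)
    then show "x \<in> LBF (pat h)" by (simp add: x LBF_def ph map2_map_same)
  qed
  have finA: "finite A" by (rule inj_on_finite[OF inj imgF finite_LBF])
  let ?P = "\<lambda>p. pat (fst p) = u \<and> pat (snd p) = g"
  have "wmult (Mq u) (Mq g) h = (\<Sum>p\<in>A. Mq u (fst p) * Mq g (snd p) :: 'k)"
    by (simp add: wmult_def A_def)
  also have "\<dots> = (\<Sum>p\<in>A. if ?P p then 1 else 0)"
    by (rule sum.cong) (auto simp: Mq_alt A_def)
  also have "\<dots> = (\<Sum>p\<in>{p\<in>A. ?P p}. 1)"
    using finA by (simp add: sum.inter_filter[symmetric])
  also have "\<dots> = of_nat (card {p\<in>A. ?P p})" by simp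
  also have "card {p\<in>A. ?P p} = card (LB u g (pat h))"
  proof (rule bij_betw_same_card[of \<phi>], rule bij_betw_imageI)
    show "inj_on \<phi> {p \<in> A. ?P p}" by (rule inj_on_subset[OF inj]) auto
    show "\<phi> ` {p \<in> A. ?P p} = LB u g (pat h)"
    proof
      show "\<phi> ` {p \<in> A. ?P p} \<subseteq> LB u g (pat h)"
      proof
        fix x assume "x \<in> \<phi> ` {p \<in> A. ?P p}"
        then obtain f g' where fg: "(f,g') \<in> A" "pat f = u" "pat g' = g" and x: "x = (map f L, map g' L)"
          by (auto simp: \<phi>_def)
        have "x \<in> LBF (pat h)" using imgF fg x by (auto simp: \<phi>_def)
        then show "x \<in> LB u g (pat h)" using patA[OF fg(1)] fg by (simp add: LB_def x)
      qed
    next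
      show "LB u g (pat h) \<subseteq> \<phi> ` {p \<in> A. ?P p}"
      proof
        fix x assume xm: "x \<in> LB u g (pat h)"
        then obtain a b where x: "x = (a,b)" and la: "length a = length L" and lb: "length b = length L"
          and m: "map2 tplus a b = map h L" and fa: "filter (\<lambda>x. x \<noteq> Num 0) a = u"
          and fb: "filter (\<lambda>x. x \<noteq> Num 0) b = g"
          by (auto simp: LB_def LBF_def ph)
        define f where "f = (\<lambda>i. case map_of (zip L a) i of None \<Rightarrow> Num 0 | Some y \<Rightarrow> y)"
        define g' where "g' = (\<lambda>i. case map_of (zip L b) i of None \<Rightarrow> Num 0 | Some y \<Rightarrow> y)"
        have fn: "f (L!k) = a!k" if "k < length L" for k
          using map_of_zip_nth[OF la[symmetric] dL, of k] that la by (simp add: f_def)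
        have gn: "g' (L!k) = b!k" if "k < length L" for k
          using map_of_zip_nth[OF lb[symmetric] dL, of k] that lb by (simp add: g'_def)
        have fo: "f i = Num 0" "g' i = Num 0" if "i \<notin> set L" for i
          using that by (auto simp: f_def g'_def split: option.split dest!: map_of_SomeD set_zip_leftD)
        have mf: "map f L = a" by (rule nth_equalityI) (simp_all add: la fn)
        have mg: "map g' L = b" by (rule nth_equalityI) (simp_all add: lb gn)
        have fsf: "finsupp f" "finsupp g'" unfolding finsupp_def
          by (rule finite_subset[of _ "set L"], use fo in auto)+
        have tp: "(\<lambda>i. tplus (f i) (g' i)) = h"
        proof
          fix i show "tplus (f i) (g' i) = h i"
          proof (cases "i \<in> set L")
            case True
            then obtain k where k: "k < length L" "i = L!k" by (auto simp: in_set_conv_nth)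
            have "(map2 tplus a b) ! k = (map h L) ! k" using m by simp
            then show ?thesis using k fn gn la lb by simp
          next
            case False
            then show ?thesis using fo setL by (simp add: supp_def)
          qed
        qed
        have inA: "(f,g') \<in> A" using fsf tp by (simp add: A_def)
        have "?P (f,g')" using patA[OF inA] mf mg fa fb by simp
        moreover have "x = \<phi> (f,g')" by (simp add: \<phi>_def x mf mg)
        ultimately show "x \<in> \<phi> ` {p \<in> A. ?P p}" using inA by blast
      qed
    qed
  qed
  also have "card (LB u g (pat h)) = qs u g (pat h)" by (rule card_LB[OF pat_nz[OF fs]])
  finally show ?thesis .
qed



definition R :: "ntilde list \<Rightarrow> ntilde list \<Rightarrow> ntilde list \<Rightarrow> nat" where
  "R u v t = (\<Sum>j\<in>{1..length u}.
      (if take (Suc j) t = take j u @ [Eps] then qs (drop j u) v (drop (Suc j) t) else 0)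
    + (if take j t = take j u then qs (drop j u) v (drop j t) else 0))"

lemma R_Nil: "R [] v t = 0" by (simp add: R_def)

lemma R_Nil2: "R u v [] = 0"
  by (auto simp: R_def intro!: sum.neutral)

lemma R_Cons: "R (a#u) v (x#t) = (if x = a then (if t \<noteq> [] \<and> hd t = Eps then qs u v (tl t) else 0)
   + qs u v t + R u v t else 0)"
proof -
  let ?g = "\<lambda>uu tt j. (if take (Suc j) tt = take j uu @ [Eps] then qs (drop j uu) v (drop (Suc j) tt) else 0)
    + (if take j tt = take j uu then qs (drop j uu) v (drop j tt) else 0)"
  have "R (a#u) v (x#t) = sum (?g (a#u) (x#t)) {1..Suc (length u)}"
    by (simp only: R_def length_Cons)
  also have "\<dots> = ?g (a#u) (x#t) 1 + sum (?g (a#u) (x#t)) {Suc 1..Suc (length u)}"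
    by (rule sum.atLeast_Suc_atMost) simp
  also have "sum (?g (a#u) (x#t)) {Suc 1..Suc (length u)} = sum (\<lambda>j. ?g (a#u) (x#t) (Suc j)) {1..length u}"
    by (rule sum.shift_bounds_cl_Suc_ivl)
  also have "\<dots> = sum (\<lambda>j. if x = a then ?g u t j else 0) {1..length u}"
    by (rule sum.cong) auto
  also have "?g (a#u) (x#t) 1 = (if x = a then (if t \<noteq> [] \<and> hd t = Eps then qs u v (tl t) else 0) + qs u v t else 0)"
    by (cases t) auto
  finally show ?thesis by (simp add: R_def)
qed

lemma qs_eps: "is_comp u \<Longrightarrow> qs u (Eps#v) t = (if t \<noteq> [] \<and> hd t = Eps then qs u v (tl t) else 0) + R u v t"
proof (induction u arbitrary: t)
  case Nil
  then show ?case by (cases t) (auto simp: qs_nil R_Nil)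
next
  case (Cons a u)
  have a: "a \<noteq> Num 0" and u: "is_comp u" using Cons.prems by (auto simp: is_comp_def)
  show ?case
  proof (cases t)
    case Nil then show ?thesis by (simp add: R_Nil2)
  next
    case (Cons x t')
    show ?thesis using Cons.IH[OF u, of t'] a by (simp add: Cons R_Cons tplus_Eps_R)
  qed
qed



definition K :: "ntilde list \<Rightarrow> ntilde list \<Rightarrow> nat" where
  "K y v = sum_list (map ntval y) + sum_list (map ntval v)"

definition SS :: "ntilde list \<Rightarrow> ntilde list \<Rightarrow> ntilde list set" where
  "SS y v = {s. set s \<subseteq> {x. ntval x \<le> K y v} \<and> length s \<le> length y + length v}"

lemma finite_SS: "finite (SS y v)"
  unfolding SS_def by (rule finite_lists_length_le[OF finite_ntval_le])

lemma qs_supp: "qs y v s \<noteq> 0 \<Longrightarrow> s \<in> SS y v"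
proof (induction s arbitrary: y v)
  case Nil then show ?case by (simp add: SS_def split: if_splits)
next
  case (Cons x s)
  have dj: "(v \<noteq> [] \<and> hd v = x \<and> qs y (tl v) s \<noteq> 0) \<or> (y \<noteq> [] \<and> hd y = x \<and> qs (tl y) v s \<noteq> 0)
     \<or> (y \<noteq> [] \<and> v \<noteq> [] \<and> tplus (hd y) (hd v) = x \<and> qs (tl y) (tl v) s \<noteq> 0)"
    using Cons.prems by (auto split: if_splits)
  have gen: "x#s \<in> SS y v" if "s \<in> SS y' v'" "K y' v' + ntval x \<le> K y v" "length y' + length v' < length y + length v" for y' v'
  proof -
    have a: "set s \<subseteq> {z. ntval z \<le> K y' v'}" "length s \<le> length y' + length v'" using that(1) by (simp_all add: SS_def)
    have "set (x#s) \<subseteq> {z. ntval z \<le> K y v}"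
    proof
      fix z assume "z \<in> set (x#s)"
      then show "z \<in> {z. ntval z \<le> K y v}" using a(1) that(2) by auto
    qed
    moreover have "length (x#s) \<le> length y + length v" using a(2) that(3) by simp
    ultimately show ?thesis by (simp add: SS_def)
  qed
  show ?case
  using dj proof (elim disjE conjE)
    assume "v \<noteq> []" "hd v = x" "qs y (tl v) s \<noteq> 0"
    moreover obtain c v' where "v = c#v'" using \<open>v \<noteq> []\<close> by (cases v) auto
    ultimately show ?thesis using Cons.IH[of y v'] by (intro gen[of y v']) (auto simp: K_def)
  next
    assume "y \<noteq> []" "hd y = x" "qs (tl y) v s \<noteq> 0"
    moreover obtain c y' where "y = c#y'" using \<open>y \<noteq> []\<close> by (cases y) auto
    ultimately show ?thesis using Cons.IH[of y' v] by (intro gen[of y' v]) (auto simp: K_def)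
  next
    assume "y \<noteq> []" "v \<noteq> []" "tplus (hd y) (hd v) = x" "qs (tl y) (tl v) s \<noteq> 0"
    moreover obtain c y' where "y = c#y'" using \<open>y \<noteq> []\<close> by (cases y) auto
    moreover obtain d v' where "v = d#v'" using \<open>v \<noteq> []\<close> by (cases v) auto
    ultimately show ?thesis using Cons.IH[of y' v'] by (intro gen[of y' v']) (auto simp: K_def ntval_tplus)
  qed
qed

lemma sum_prefix:
  "(\<Sum>s\<in>SS y v. of_nat (qs y v s) * (if t = p @ s then 1 else 0))
   = (of_nat (if take (length p) t = p then qs y v (drop (length p) t) else 0) :: 'k::comm_ring_1)"
proof (cases "take (length p) t = p")
  case True
  have "(\<Sum>s\<in>SS y v. of_nat (qs y v s) * (if t = p @ s then 1 else 0))
      = (\<Sum>s\<in>SS y v. if drop (length p) t = s then of_nat (qs y v s) else (0::'k))"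
  proof (rule sum.cong)
    fix s
    have "(t = p @ s) = (drop (length p) t = s)" using True by (metis append_eq_conv_conj)
    then show "of_nat (qs y v s) * (if t = p @ s then 1 else 0) = (if drop (length p) t = s then of_nat (qs y v s) else (0::'k))"
      by simp
  qed simp
  also have "\<dots> = (if drop (length p) t \<in> SS y v then of_nat (qs y v (drop (length p) t)) else 0)"
    using finite_SS by simp
  also have "\<dots> = of_nat (qs y v (drop (length p) t))"
  proof (cases "drop (length p) t \<in> SS y v")
    case False
    then have "qs y v (drop (length p) t) = 0" using qs_supp by blast
    then show ?thesis using False by simp
  qed simp
  finally show ?thesis using True by simp
next
  case False
  then have "\<And>s. t \<noteq> p @ s" by auto
  then show ?thesis using False by simp
qed



lemma I_zero: "(\<lambda>h. 0) \<in> (I_eps :: 'k::comm_ring_1 wser set)"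
  unfolding I_eps_def
  apply (rule CollectI)
  apply (rule exI[of _ 0])
  by auto

lemma sum_split_add: "(\<Sum>j<n+m. f j) = (\<Sum>j<n. f j) + (\<Sum>j<m. f (n+j)) "
  for f :: "nat \<Rightarrow> 'a::comm_monoid_add"
  by (induction m) (simp_all add: add.assoc)

lemma I_add:
  assumes "F \<in> (I_eps :: 'k::comm_ring_1 wser set)" "G \<in> I_eps"
  shows "(\<lambda>h. F h + G h) \<in> I_eps"
proof -
  obtain n and w :: "nat \<Rightarrow> 'k wser" and \<gamma> where 1: "\<forall>j<n. w j \<in> WCQSym \<and> \<gamma> j \<in> C_eps" "F = (\<lambda>h. \<Sum>j<n. wmult (w j) (Mq (\<gamma> j)) h)"
    using assms(1) unfolding I_eps_def by blast
  obtain m and w' :: "nat \<Rightarrow> 'k wser" and \<gamma>' where 2: "\<forall>j<m. w' j \<in> WCQSym \<and> \<gamma>' j \<in> C_eps" "G = (\<lambda>h. \<Sum>j<m. wmult (w' j) (Mq (\<gamma>' j)) h)"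
    using assms(2) unfolding I_eps_def by blast
  define W where "W j = (if j < n then w j else w' (j - n))" for j
  define \<Gamma> where "\<Gamma> j = (if j < n then \<gamma> j else \<gamma>' (j - n))" for j
  have a: "\<forall>j<n+m. W j \<in> WCQSym \<and> \<Gamma> j \<in> C_eps"
  proof (intro allI impI)
    fix j assume "j < n + m"
    then show "W j \<in> WCQSym \<and> \<Gamma> j \<in> C_eps"
      using 1(1) 2(1) by (cases "j < n") (auto simp: W_def \<Gamma>_def)
  qed
  have b: "(\<lambda>h. F h + G h) = (\<lambda>h. \<Sum>j<n+m. wmult (W j) (Mq (\<Gamma> j)) h)"
  proof
    fix h
    have "(\<Sum>j<n+m. wmult (W j) (Mq (\<Gamma> j)) h) = (\<Sum>j<n. wmult (W j) (Mq (\<Gamma> j)) h) + (\<Sum>j<m. wmult (W (n+j)) (Mq (\<Gamma> (n+j))) h)"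
      by (rule sum_split_add)
    also have "(\<Sum>j<n. wmult (W j) (Mq (\<Gamma> j)) h) = F h" unfolding 1(2) by (rule sum.cong) (auto simp: W_def \<Gamma>_def)
    also have "(\<Sum>j<m. wmult (W (n+j)) (Mq (\<Gamma> (n+j))) h) = G h" unfolding 2(2) by (rule sum.cong) (auto simp: W_def \<Gamma>_def)
    finally show "F h + G h = (\<Sum>j<n+m. wmult (W j) (Mq (\<Gamma> j)) h)" by simp
  qed
  show ?thesis unfolding I_eps_def using a b by blast
qed

lemma wmult_smult: "wmult (\<lambda>h. c * F h) G h = c * wmult F G h"
  unfolding wmult_def by (simp add: sum_distrib_left mult.assoc)

lemma WC_smult: "F \<in> WCQSym \<Longrightarrow> (\<lambda>h. c * F h) \<in> (WCQSym :: 'k::comm_ring_1 wser set)"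
proof -
  assume "F \<in> WCQSym"
  then obtain S cc where "finite S" "\<forall>\<alpha>\<in>S. is_comp \<alpha>" "F = (\<lambda>h. \<Sum>\<alpha>\<in>S. cc \<alpha> * Mq \<alpha> h)"
    unfolding WCQSym_def by blast
  moreover have "(\<lambda>h. c * (\<Sum>\<alpha>\<in>S. cc \<alpha> * Mq \<alpha> h)) = (\<lambda>h. \<Sum>\<alpha>\<in>S. (c * cc \<alpha>) * Mq \<alpha> h)"
    by (simp add: sum_distrib_left mult.assoc)
  ultimately show ?thesis unfolding WCQSym_def by auto
qed

lemma I_smult:
  assumes "F \<in> (I_eps :: 'k::comm_ring_1 wser set)"
  shows "(\<lambda>h. c * F h) \<in> I_eps"
proof -
  obtain n and w :: "nat \<Rightarrow> 'k wser" and \<gamma> where 1: "\<forall>j<n. w j \<in> WCQSym \<and> \<gamma> j \<in> C_eps" "F = (\<lambda>h. \<Sum>j<n. wmult (w j) (Mq (\<gamma> j)) h)"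
    using assms(1) unfolding I_eps_def by blast
  define W where "W j = (\<lambda>h. c * w j h)" for j
  have a: "\<forall>j<n. W j \<in> WCQSym \<and> \<gamma> j \<in> C_eps" using 1(1) by (simp add: W_def WC_smult)
  have b: "(\<lambda>h. c * F h) = (\<lambda>h. \<Sum>j<n. wmult (W j) (Mq (\<gamma> j)) h)"
    unfolding 1(2) W_def by (simp add: wmult_smult sum_distrib_left)
  show ?thesis unfolding I_eps_def using a b by blast
qed

lemma I_diff:
  assumes "F \<in> (I_eps :: 'k::comm_ring_1 wser set)" "G \<in> I_eps"
  shows "(\<lambda>h. F h - G h) \<in> I_eps"
proof -
  have "(\<lambda>h. F h + (-1) * G h) \<in> I_eps" by (rule I_add[OF assms(1) I_smult[OF assms(2)]])
  then show ?thesis by simp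
qed

lemma I_sum:
  assumes "finite S" "\<And>s. s \<in> S \<Longrightarrow> F s \<in> (I_eps :: 'k::comm_ring_1 wser set)"
  shows "(\<lambda>h. \<Sum>s\<in>S. F s h) \<in> I_eps"
  using assms
proof (induction S rule: finite_induct)
  case empty then show ?case using I_zero by simp
next
  case (insert x S)
  have "(\<lambda>h. F x h + (\<Sum>s\<in>S. F s h)) \<in> I_eps"
    by (rule I_add) (use insert in auto)
  then show ?case using insert by simp
qed

lemma Mq_noncomp: "\<not> is_comp \<gamma> \<Longrightarrow> Mq \<gamma> = (\<lambda>h. 0)"
  by (rule ext) (auto simp: Mq_alt is_comp_def dest: pat_nz)

lemma Mq_in_WC: "is_comp u \<Longrightarrow> Mq u \<in> WCQSym"
  unfolding WCQSym_def
  by (rule CollectI, rule exI[of _ "{u}"], rule exI[of _ "\<lambda>_. 1"]) auto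

lemma I_gen: "is_comp u \<Longrightarrow> \<gamma> \<in> C_eps \<Longrightarrow> (\<lambda>h. wmult (Mq u) (Mq \<gamma>) h) \<in> (I_eps :: 'k::comm_ring_1 wser set)"
  unfolding I_eps_def
  apply (rule CollectI)
  apply (rule exI[of _ 1], rule exI[of _ "\<lambda>_. Mq u"], rule exI[of _ "\<lambda>_. \<gamma>"])
  by (simp add: Mq_in_WC)

lemma wmult_one: "wmult (Mq []) (Mq \<gamma>) = (Mq \<gamma> :: 'k::comm_ring_1 wser)"
proof
  fix h show "wmult (Mq []) (Mq \<gamma>) h = (Mq \<gamma> h :: 'k)"
    by (cases "finsupp h") (simp_all add: wmult_Mq qs_nil Mq_alt wmult_nonfin)
qed

lemma I_Mq: "\<gamma> \<noteq> [] \<Longrightarrow> hd \<gamma> = Eps \<Longrightarrow> Mq \<gamma> \<in> (I_eps :: 'k::comm_ring_1 wser set)"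
proof (cases "is_comp \<gamma>")
  case True
  assume "\<gamma> \<noteq> []" "hd \<gamma> = Eps"
  then have "(\<lambda>h. wmult (Mq []) (Mq \<gamma>) h) \<in> (I_eps :: 'k wser set)"
    using True by (intro I_gen) (auto simp: C_eps_def is_comp_def)
  then show ?thesis by (simp add: wmult_one)
next
  case False then show ?thesis using I_zero by (simp add: Mq_noncomp)
qed



lemma rule_lem:
  fixes u :: "ntilde list"
  shows "u \<noteq> [] \<Longrightarrow> is_comp u \<Longrightarrow> hd u \<noteq> Eps \<Longrightarrow>
     (\<lambda>h. Mq (u @ Eps # v) h + Mq (u @ v) h) \<in> (I_eps :: 'k::comm_ring_1 wser set)"
proof (induction "length u" arbitrary: u v rule: less_induct)
  case less
  show ?case
  proof (cases "is_comp v")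
    case False
    then have "\<not> is_comp (u@Eps#v)" "\<not> is_comp (u@v)" by (auto simp: is_comp_def)
    then show ?thesis using I_zero by (simp add: Mq_noncomp)
  next
    case True
    define n where "n = length u"
    define T where "T j s = (\<lambda>h. Mq (take j u @ Eps # s) h + Mq (take j u @ s) h :: 'k)" for j s
    define E0 where "E0 = (\<lambda>h. \<Sum>s\<in>SS u v. of_nat (qs u v s) * Mq (Eps # s) h :: 'k)"
    define Mid where "Mid = (\<lambda>h. \<Sum>j\<in>{1..<n}. \<Sum>s\<in>SS (drop j u) v. of_nat (qs (drop j u) v s) * T j s h)"
    have key: "Mq (u@Eps#v) h + Mq (u@v) h = wmult (Mq u) (Mq (Eps#v)) h - E0 h - Mid h" for h
    proof (cases "finsupp h")
      case False
      then show ?thesis by (simp add: Mq_alt wmult_nonfin E0_def Mid_def T_def)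
    next
      case True
      define t where "t = pat h"
      have Mqt: "Mq \<alpha> h = (if t = \<alpha> then 1 else 0)" for \<alpha> using True by (simp add: Mq_alt t_def)
      have W: "wmult (Mq u) (Mq (Eps#v)) h = (of_nat (if t \<noteq> [] \<and> hd t = Eps then qs u v (tl t) else 0) + of_nat (R u v t) :: 'k)"
        unfolding wmult_Mq[OF True] qs_eps[OF less.prems(2)] t_def of_nat_add ..
      have E: "E0 h = of_nat (if t \<noteq> [] \<and> hd t = Eps then qs u v (tl t) else 0)"
      proof -
        have "E0 h = (\<Sum>s\<in>SS u v. of_nat (qs u v s) * (if t = [Eps] @ s then 1 else 0))" by (simp add: E0_def Mqt)
        also have "\<dots> = of_nat (if take (length [Eps]) t = [Eps] then qs u v (drop (length [Eps]) t) else 0)"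
          by (rule sum_prefix)
        also have "\<dots> = of_nat (if t \<noteq> [] \<and> hd t = Eps then qs u v (tl t) else 0)" by (cases t) auto
        finally show ?thesis .
      qed
      define c1 where "c1 j = (if take (Suc j) t = take j u @ [Eps] then qs (drop j u) v (drop (Suc j) t) else 0)" for j
      define c2 where "c2 j = (if take j t = take j u then qs (drop j u) v (drop j t) else 0)" for j
      have Rs: "R u v t = (\<Sum>j\<in>{1..<n}. c1 j + c2 j) + (c1 n + c2 n)"
      proof -
        have "{1..n} = insert n {1..<n}" using less.prems(1) by (auto simp: n_def Suc_le_eq)
        then show ?thesis by (simp add: R_def c1_def c2_def n_def add.commute)
      qed
      have Tj: "(\<Sum>s\<in>SS (drop j u) v. of_nat (qs (drop j u) v s) * T j s h) = (of_nat (c1 j + c2 j) :: 'k)" if "j < n" for j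
      proof -
        have l: "length (take j u @ [Eps]) = Suc j" "length (take j u) = j" using that by (simp_all add: n_def)
        have "(\<Sum>s\<in>SS (drop j u) v. of_nat (qs (drop j u) v s) * T j s h)
           = (\<Sum>s\<in>SS (drop j u) v. of_nat (qs (drop j u) v s) * (if t = (take j u @ [Eps]) @ s then 1 else 0))
           + (\<Sum>s\<in>SS (drop j u) v. of_nat (qs (drop j u) v s) * (if t = take j u @ s then (1::'k) else 0))"
          by (simp add: T_def Mqt distrib_left sum.distrib)
        also have "\<dots> = of_nat (c1 j) + of_nat (c2 j)" unfolding sum_prefix l c1_def c2_def by simp
        finally show ?thesis by simp
      qed
      have Mh: "Mid h = of_nat (\<Sum>j\<in>{1..<n}. c1 j + c2 j)"
        unfolding Mid_def of_nat_sum by (rule sum.cong) (auto simp: Tj)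
      have c1n: "c1 n = (if t = u @ Eps # v then 1 else 0)"
      proof -
        have "(t = u @ Eps # v) = (take (Suc n) t = u @ [Eps] \<and> drop (Suc n) t = v)"
          using append_eq_conv_conj[of "u@[Eps]" v t] by (auto simp: n_def)
        then show ?thesis by (simp add: c1_def n_def qs_nil eq_commute)
      qed
      have c2n: "c2 n = (if t = u @ v then 1 else 0)"
      proof -
        have "(t = u @ v) = (take n t = u \<and> drop n t = v)"
          using append_eq_conv_conj[of u v t] by (auto simp: n_def)
        then show ?thesis by (simp add: c2_def n_def qs_nil eq_commute)
      qed
      show ?thesis using W E Rs Mh c1n c2n by (simp add: Mqt)
    qed
    have I1: "(\<lambda>h. wmult (Mq u) (Mq (Eps#v)) h) \<in> (I_eps :: 'k wser set)"
      by (rule I_gen) (use less.prems True in \<open>auto simp: C_eps_def is_comp_def\<close>)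
    have I2: "E0 \<in> I_eps" unfolding E0_def
      by (rule I_sum[OF finite_SS], rule I_smult[OF I_Mq]) simp_all
    have I3: "Mid \<in> I_eps" unfolding Mid_def
    proof (rule I_sum, simp, rule I_sum[OF finite_SS], rule I_smult)
      fix j s assume j: "j \<in> {1..<n}"
      have "(\<lambda>h. Mq (take j u @ Eps # s) h + Mq (take j u @ s) h) \<in> (I_eps :: 'k wser set)"
      proof (rule less.hyps)
        show "length (take j u) < length u" using j by (simp add: n_def)
        show "take j u \<noteq> []" using j less.prems(1) by auto
        show "is_comp (take j u)" using less.prems(2) set_take_subset[of j u] by (auto simp: is_comp_def)
        show "hd (take j u) \<noteq> Eps" using j less.prems(3) by simp
      qed
      then show "T j s \<in> I_eps" by (simp add: T_def)
    qed
    have "(\<lambda>h. wmult (Mq u) (Mq (Eps#v)) h - E0 h - Mid h) \<in> (I_eps :: 'k wser set)"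
      by (rule I_diff[OF I_diff[OF I1 I2] I3])
    then show ?thesis by (simp add: key)
  qed
qed

theorem lemma3p11:
  fixes \<alpha> :: "ntilde list"
  assumes k_Q: "\<forall>n::nat. n \<noteq> 0 \<longrightarrow> (\<exists>y::'k::comm_ring_1. of_nat n * y = 1)"
    and "\<alpha> \<in> C_N"
  shows "(\<lambda>h. Mq \<alpha> h + (-1) ^ (len_eps \<alpha> + 1) * Mq (bar \<alpha>) h) \<in> (I_eps :: 'k wser set)"
proof -
  have "\<forall>\<alpha>. \<alpha> \<in> C_N \<longrightarrow> len_eps \<alpha> = k \<longrightarrow>
      (\<lambda>h. Mq \<alpha> h + (-1) ^ (len_eps \<alpha> + 1) * Mq (bar \<alpha>) h) \<in> (I_eps :: 'k wser set)" for k
  proof (induction k)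
    case 0
    show ?case
    proof (intro allI impI)
      fix \<alpha> :: "ntilde list" assume "\<alpha> \<in> C_N" "len_eps \<alpha> = 0"
      then have "bar \<alpha> = \<alpha>" by (auto simp: len_eps_def bar_def filter_empty_conv intro: filter_True)
      then show "(\<lambda>h. Mq \<alpha> h + (-1) ^ (len_eps \<alpha> + 1) * Mq (bar \<alpha>) h) \<in> (I_eps :: 'k wser set)"
        using \<open>len_eps \<alpha> = 0\<close> I_zero by simp
    qed
  next
    case (Suc k)
    show ?case
    proof (intro allI impI)
      fix \<alpha> :: "ntilde list" assume aC: "\<alpha> \<in> C_N" and le: "len_eps \<alpha> = Suc k"
      have "Eps \<in> set \<alpha>"
      proof (rule ccontr)
        assume "Eps \<notin> set \<alpha>"
        then have "filter (\<lambda>x. x = Eps) \<alpha> = []" by (auto simp: filter_empty_conv)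
        then show False using le by (simp add: len_eps_def)
      qed
      then obtain u v where a: "\<alpha> = u @ Eps # v" and nu: "Eps \<notin> set u" by (metis split_list_first)
      have u: "u \<noteq> []" using aC a by (auto simp: C_N_def)
      have hu: "hd u \<noteq> Eps" using aC a u by (auto simp: C_N_def)
      have cu: "is_comp u" and cuv: "is_comp (u@v)" using aC a by (auto simp: C_N_def is_comp_def)
      have bC: "u @ v \<in> C_N" using cuv u hu by (auto simp: C_N_def)
      have fu: "filter (\<lambda>x. x = Eps) u = []" using nu by (auto simp: filter_empty_conv)
      have lb: "len_eps (u@v) = k" using le a fu by (simp add: len_eps_def)
      have bb: "bar (u@v) = bar \<alpha>" using a by (simp add: bar_def)
      have IH: "(\<lambda>h. Mq (u@v) h + (-1) ^ (k + 1) * Mq (bar \<alpha>) h) \<in> (I_eps :: 'k wser set)"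
        using Suc.IH bC lb bb by metis
      have RL: "(\<lambda>h. Mq (u @ Eps # v) h + Mq (u @ v) h) \<in> (I_eps :: 'k wser set)"
        by (rule rule_lem[OF u cu hu])
      have "(\<lambda>h. (Mq (u @ Eps # v) h + Mq (u @ v) h) - (Mq (u@v) h + (-1) ^ (k + 1) * Mq (bar \<alpha>) h)) \<in> (I_eps :: 'k wser set)"
        by (rule I_diff[OF RL IH])
      then show "(\<lambda>h. Mq \<alpha> h + (-1) ^ (len_eps \<alpha> + 1) * Mq (bar \<alpha>) h) \<in> (I_eps :: 'k wser set)"
        using a le by simp
    qed
  qed
  then show ?thesis using assms(2) by blast
qed


end
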